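(* Let $G$, $k$, $\epsilon$, $M$ be as in the standing setting. Then $G$ contains none of the following configurations: (C1) a vertex $u$ with $d(u)\le 1$; (C2) a path $w_1u_1u_2w_2$ with $d(u_1)=d(u_2)=2$, $d(w_1)\le k-1$ and $d(w_2)\le k-2$; (C3) a vertex $u$ with $3\le d(u)\le M$ whose neighbors are $v_1,\dots,v_{d(u)-2},x,y$, where each $v_i$ has degree $2$ and its other neighbor $w_i$ satisfies $d(w_i)\le M$ (the $w_i$ need not be distinct from each other or from $x,y$), and $d(x)+d(y)\le k-M+2$.
   Context: Standing setting: let $0<\epsilon\le 1/20$, $M=6/\epsilon$, and let $k$ be an integer with $k\ge 3/\epsilon^2$ (so $k\ge 3M$). Let $G$ be a finite simple graph with $\Delta(G)\le k$ such that the square of $G$ is not list $(k+1)$-colorable, while the square of every proper subgraph of $G$ is list $(k+1)$-colorable. Here the square of a graph has the same vertex set, two distinct vertices being adjacent iff they are adjacent or have a common neighbor; it is list $(k+1)$-colorable if for every assignment of lists of $k+1$ colors to the vertices there is a proper coloring of the square from the lists. $d(v)$ denotes the degree of $v$ in $G$. *)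

theory Defs
  imports Complex_Main
begin

definition simple_graph :: "'a set \<Rightarrow> 'a set set \<Rightarrow> bool" where
  "simple_graph V E \<longleftrightarrow> finite V \<and>
     (\<forall>e\<in>E. \<exists>u v. e = {u, v} \<and> u \<noteq> v \<and> u \<in> V \<and> v \<in> V)"

definition nbrs :: "'a set set \<Rightarrow> 'a \<Rightarrow> 'a set" where
  "nbrs E v = {u. {u, v} \<in> E}"

definition deg :: "'a set set \<Rightarrow> 'a \<Rightarrow> nat" where
  "deg E v = card (nbrs E v)"

definition sq_adj :: "'a set \<Rightarrow> 'a set set \<Rightarrow> 'a \<Rightarrow> 'a \<Rightarrow> bool" where
  "sq_adj V E u v \<longleftrightarrow> u \<in> V \<and> v \<in> V \<and> u \<noteq> v \<and>
     ({u, v} \<in> E \<or> (\<exists>w. {u, w} \<in> E \<and> {w, v} \<in> E))"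

definition sq_list_colorable :: "'a set \<Rightarrow> 'a set set \<Rightarrow> nat \<Rightarrow> bool" where
  "sq_list_colorable V E n \<longleftrightarrow>
     (\<forall>L :: 'a \<Rightarrow> nat set. (\<forall>v\<in>V. finite (L v) \<and> card (L v) = n) \<longrightarrow>
        (\<exists>c. (\<forall>v\<in>V. c v \<in> L v) \<and> (\<forall>u v. sq_adj V E u v \<longrightarrow> c u \<noteq> c v)))"

definition proper_subgraph :: "'a set \<Rightarrow> 'a set set \<Rightarrow> 'a set \<Rightarrow> 'a set set \<Rightarrow> bool" where
  "proper_subgraph V' E' V E \<longleftrightarrow> V' \<subseteq> V \<and> E' \<subseteq> E \<and> (\<forall>e\<in>E'. e \<subseteq> V') \<and> (V', E') \<noteq> (V, E)"

end

theory Submission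
  imports Defs
begin

definition good :: "'a set \<Rightarrow> 'a set set \<Rightarrow> ('a \<Rightarrow> nat set) \<Rightarrow> 'a set \<Rightarrow> ('a \<Rightarrow> nat) \<Rightarrow> bool" where
  "good V E L A c \<longleftrightarrow> (\<forall>v\<in>A. c v \<in> L v) \<and> (\<forall>a\<in>A. \<forall>b\<in>A. sq_adj V E a b \<longrightarrow> c a \<noteq> c b)"

lemma sg_edge: assumes "simple_graph V E" "{a,b} \<in> E" shows "a \<in> V \<and> b \<in> V \<and> a \<noteq> b"
proof -
  obtain u v where "{a,b} = {u,v}" "u \<noteq> v" "u \<in> V" "v \<in> V"
    using assms unfolding simple_graph_def by blast
  then show ?thesis by (auto simp: doubleton_eq_iff)
qed

lemma nbrs_sub: "simple_graph V E \<Longrightarrow> nbrs E v \<subseteq> V"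
  unfolding nbrs_def using sg_edge by fastforce

lemma nbrs_fin: "simple_graph V E \<Longrightarrow> finite (nbrs E v)"
  using nbrs_sub finite_subset unfolding simple_graph_def by metis

lemma nbrs_sym: "a \<in> nbrs E b \<longleftrightarrow> b \<in> nbrs E a"
  unfolding nbrs_def by (simp add: insert_commute)

lemma sq_adj_sym: "sq_adj V E a b \<Longrightarrow> sq_adj V E b a"
  unfolding sq_adj_def by (auto simp: insert_commute)

lemma sq_card:
  assumes G: "simple_graph V E"
  shows "card {z\<in>A. sq_adj V E s z} \<le> (\<Sum>w\<in>nbrs E s. card (({w} \<union> (nbrs E w - {s})) \<inter> A))"
proof -
  have sub: "{z\<in>A. sq_adj V E s z} \<subseteq> (\<Union>w\<in>nbrs E s. ({w} \<union> (nbrs E w - {s})) \<inter> A)"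
    unfolding sq_adj_def nbrs_def by (auto simp: insert_commute)
  have fin: "finite (\<Union>w\<in>nbrs E s. ({w} \<union> (nbrs E w - {s})) \<inter> A)"
    using nbrs_fin[OF G] by auto
  have "card {z\<in>A. sq_adj V E s z} \<le> card (\<Union>w\<in>nbrs E s. ({w} \<union> (nbrs E w - {s})) \<inter> A)"
    by (rule card_mono[OF fin sub])
  also have "\<dots> \<le> (\<Sum>w\<in>nbrs E s. card (({w} \<union> (nbrs E w - {s})) \<inter> A))"
    by (rule card_UN_le[OF nbrs_fin[OF G]])
  finally show ?thesis .
qed

lemma term_le:
  assumes G: "simple_graph V E" and s: "s \<in> nbrs E w"
  shows "card (({w} \<union> (nbrs E w - {s})) \<inter> A) \<le> deg E w"
proof -
  have f: "finite (nbrs E w)" using nbrs_fin[OF G] .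
  have "card (({w} \<union> (nbrs E w - {s})) \<inter> A) \<le> card ({w} \<union> (nbrs E w - {s}))"
    using f by (intro card_mono) auto
  also have "\<dots> \<le> Suc (card (nbrs E w - {s}))"
    using card_insert_le_m1 by (simp add: card_insert_if f)
  also have "\<dots> = deg E w"
    using s f unfolding deg_def by (simp add: card_Diff_singleton) (metis Suc_pred card_gt_0_iff emptyE)
  finally show ?thesis .
qed

lemma extend1:
  assumes G: "simple_graph V E" and Ls: "finite (L s)" "card (L s) = k + 1"
    and g: "good V E L A c" and bd: "card {z\<in>A. sq_adj V E s z} \<le> k"
  shows "\<exists>c'. good V E L (insert s A) c'"
proof -
  define F where "F = c ` {z\<in>A. sq_adj V E s z}"
  have finZ: "finite {z\<in>A. sq_adj V E s z}"
    using G unfolding simple_graph_def sq_adj_def by (auto intro: finite_subset)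
  have "card F \<le> k" unfolding F_def using card_image_le[OF finZ, of c] bd by linarith
  then have "\<not> L s \<subseteq> F" using Ls card_mono finZ F_def by (metis Suc_eq_plus1 finite_imageI not_less_eq_eq)
  then obtain col where col: "col \<in> L s" "col \<notin> F" by blast
  define c' where "c' = c(s := col)"
  have "good V E L (insert s A) c'"
    unfolding good_def c'_def
  proof (intro conjI ballI impI)
    fix v assume "v \<in> insert s A" then show "(c(s := col)) v \<in> L v"
      using g col unfolding good_def by auto
  next
    fix a b assume a: "a \<in> insert s A" and b: "b \<in> insert s A" and ab: "sq_adj V E a b"
    have ne: "a \<noteq> b" using ab unfolding sq_adj_def by auto
    show "(c(s := col)) a \<noteq> (c(s := col)) b"
    proof (cases "a = s")
      case True
      then have "b \<in> A" "b \<noteq> s" using b ne by auto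
      then have "c b \<in> F" using ab True unfolding F_def by auto
      then show ?thesis using True col \<open>b \<noteq> s\<close> by auto
    next
      case False
      note aF = False
      show ?thesis
      proof (cases "b = s")
        case True
        then have "a \<in> A" using a aF by auto
        then have "c a \<in> F" using sq_adj_sym[OF ab] True unfolding F_def by auto
        then show ?thesis using True col aF by auto
      next
        case False
        then show ?thesis using aF a b ab g unfolding good_def by auto
      qed
    qed
  qed
  then show ?thesis by blast
qed

lemma extend_set:
  assumes G: "simple_graph V E" and B: "finite B" "B \<subseteq> V"
    and bd: "\<forall>s\<in>B. card {z\<in>V. sq_adj V E s z} \<le> k"
    and Ls: "\<forall>v\<in>V. finite (L v) \<and> card (L v) = k + 1"
    and A: "A \<subseteq> V" and g: "good V E L A c"
  shows "\<exists>c'. good V E L (A \<union> B) c'"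
  using B bd
proof (induction B rule: finite_induct)
  case empty then show ?case using g by auto
next
  case (insert x F)
  then obtain c1 where c1: "good V E L (A \<union> F) c1" by auto
  have "card {z\<in>A \<union> F. sq_adj V E x z} \<le> card {z\<in>V. sq_adj V E x z}"
    using G A insert.prems unfolding simple_graph_def by (intro card_mono) (auto intro: finite_subset)
  also have "\<dots> \<le> k" using insert.prems by auto
  finally have "\<exists>c'. good V E L (insert x (A \<union> F)) c'"
    using extend1[OF G _ _ c1] Ls insert.prems by auto
  then show ?case by simp
qed

lemma restrict:
  assumes G: "simple_graph V E"
    and minimal: "\<forall>V' E'. proper_subgraph V' E' V E \<longrightarrow> sq_list_colorable V' E' n"
    and S: "S \<subseteq> V" "S \<noteq> {}"
    and Ls: "\<forall>v\<in>V. finite (L v) \<and> card (L v) = n"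
    and A: "A \<subseteq> V - S"
    and cond: "\<forall>w\<in>S. \<forall>a\<in>A. \<forall>b\<in>A. {a,w} \<in> E \<longrightarrow> {w,b} \<in> E \<longrightarrow> a = b"
  shows "\<exists>c. good V E L A c"
proof -
  define V' where "V' = V - S"
  define E' where "E' = {e\<in>E. e \<subseteq> V'}"
  have "proper_subgraph V' E' V E"
    unfolding proper_subgraph_def V'_def E'_def using S by auto
  then have "sq_list_colorable V' E' n" using minimal by blast
  moreover have "\<forall>v\<in>V'. finite (L v) \<and> card (L v) = n" using Ls V'_def by auto
  ultimately obtain c where c: "\<forall>v\<in>V'. c v \<in> L v" "\<forall>u v. sq_adj V' E' u v \<longrightarrow> c u \<noteq> c v"
    unfolding sq_list_colorable_def by blast
  have "good V E L A c"
    unfolding good_def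
  proof (intro conjI ballI impI)
    fix v assume "v \<in> A" then show "c v \<in> L v" using c A V'_def by auto
  next
    fix a b assume a: "a \<in> A" and b: "b \<in> A" and ab: "sq_adj V E a b"
    have aV: "a \<in> V'" "b \<in> V'" using a b A V'_def by auto
    have "sq_adj V' E' a b"
    proof -
      have ne: "a \<noteq> b" using ab unfolding sq_adj_def by auto
      consider "{a,b} \<in> E" | w where "{a,w} \<in> E" "{w,b} \<in> E" using ab sq_adj_def by metis
      then show ?thesis
      proof cases
        case 1 then show ?thesis using aV ne unfolding sq_adj_def E'_def by auto
      next
        case 2
        have wV: "w \<in> V" using sg_edge[OF G 2(1)] by auto
        have "w \<notin> S" using cond 2 a b ne by blast
        then have "w \<in> V'" using wV V'_def by auto
        then show ?thesis using aV ne 2 unfolding sq_adj_def E'_def by auto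
      qed
    qed
    then show "c a \<noteq> c b" using c by auto
  qed
  then show ?thesis by blast
qed



lemma card2_eq: "finite X \<Longrightarrow> card X = 2 \<Longrightarrow> a \<in> X \<Longrightarrow> b \<in> X \<Longrightarrow> a \<noteq> b \<Longrightarrow> X = {a,b}"
proof -
  assume f: "finite X" and c: "card X = 2" and ab: "a \<in> X" "b \<in> X" "a \<noteq> b"
  have "{a,b} \<subseteq> X" using ab by auto
  moreover have "card {a,b} = card X" using ab c by simp
  ultimately have "{a,b} = X" using card_seteq[OF f] by (metis le_refl)
  then show "X = {a,b}" by simp
qed

theorem lemma2:
  fixes V :: "'a set" and E :: "'a set set" and k :: nat and \<epsilon> M :: real
  assumes eps: "0 < \<epsilon>" "\<epsilon> \<le> 1/20"
    and M_def: "M = 6 / \<epsilon>"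
    and k_ge: "real k \<ge> 3 / \<epsilon>\<^sup>2"
    and G: "simple_graph V E"
    and maxdeg: "\<forall>v\<in>V. deg E v \<le> k"
    and not_col: "\<not> sq_list_colorable V E (k + 1)"
    and minimal: "\<forall>V' E'. proper_subgraph V' E' V E \<longrightarrow> sq_list_colorable V' E' (k + 1)"
  shows "(\<forall>u\<in>V. deg E u \<ge> 2)
    \<and> \<not> (\<exists>w1 u1 u2 w2. distinct [w1, u1, u2, w2] \<and>
           {w1, u1} \<in> E \<and> {u1, u2} \<in> E \<and> {u2, w2} \<in> E \<and>
           deg E u1 = 2 \<and> deg E u2 = 2 \<and>
           deg E w1 + 1 \<le> k \<and> deg E w2 + 2 \<le> k)
    \<and> \<not> (\<exists>u x y. u \<in> V \<and> 3 \<le> deg E u \<and> real (deg E u) \<le> M \<and>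
           x \<noteq> y \<and> x \<in> nbrs E u \<and> y \<in> nbrs E u \<and>
           (\<forall>v \<in> nbrs E u - {x, y}. deg E v = 2 \<and>
               (\<forall>w. {v, w} \<in> E \<and> w \<noteq> u \<longrightarrow> real (deg E w) \<le> M)) \<and>
           real (deg E x) + real (deg E y) \<le> real k - M + 2)"
proof -
  obtain L where Ls: "\<forall>v\<in>V. finite (L v) \<and> card (L v) = k + 1"
    and nog: "\<And>c. \<not> good V E L V c"
  proof -
    have "\<exists>L :: 'a \<Rightarrow> nat set. (\<forall>v\<in>V. finite (L v) \<and> card (L v) = k + 1) \<and>
      \<not> (\<exists>c. (\<forall>v\<in>V. c v \<in> L v) \<and> (\<forall>u v. sq_adj V E u v \<longrightarrow> c u \<noteq> c v))"
      using not_col unfolding sq_list_colorable_def not_all not_imp by assumption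
    then obtain L :: "'a \<Rightarrow> nat set" where "\<forall>v\<in>V. finite (L v) \<and> card (L v) = k + 1"
      "\<not> (\<exists>c. (\<forall>v\<in>V. c v \<in> L v) \<and> (\<forall>u v. sq_adj V E u v \<longrightarrow> c u \<noteq> c v))"
      by blast
    moreover have "\<And>c. good V E L V c \<Longrightarrow> (\<forall>v\<in>V. c v \<in> L v) \<and> (\<forall>u v. sq_adj V E u v \<longrightarrow> c u \<noteq> c v)"
      unfolding good_def sq_adj_def by blast
    ultimately show ?thesis using that by metis
  qed
  have finV: "finite V" using G simple_graph_def by blast
  have nsym: "\<And>a b. {a,b} \<in> E \<Longrightarrow> a \<in> nbrs E b \<and> b \<in> nbrs E a"
    unfolding nbrs_def by (auto simp: insert_commute)
  have Lk: "\<And>v. v \<in> V \<Longrightarrow> finite (L v)" "\<And>v. v \<in> V \<Longrightarrow> card (L v) = k + 1" using Ls by auto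
  have C1: "\<forall>u\<in>V. deg E u \<ge> 2"
  proof (rule ccontr)
    assume "\<not> ?thesis"
    then obtain u where u: "u \<in> V" "deg E u \<le> 1" by force
    have cN: "card (nbrs E u) \<le> Suc 0" using u unfolding deg_def by simp
    obtain c where c: "good V E L (V - {u}) c"
    proof (rule restrict[OF G minimal, of "{u}" L "V - {u}", THEN exE])
      show "\<forall>w\<in>{u}. \<forall>a\<in>V - {u}. \<forall>b\<in>V - {u}. {a, w} \<in> E \<longrightarrow> {w, b} \<in> E \<longrightarrow> a = b"
      proof (intro ballI impI)
      fix w a b assume w: "w \<in> {u}" and "a \<in> V - {u}" "b \<in> V - {u}" "{a, w} \<in> E" "{w, b} \<in> E"
      then have "a \<in> nbrs E u" "b \<in> nbrs E u" using nsym by auto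
      moreover have "\<forall>a\<in>nbrs E u. \<forall>b\<in>nbrs E u. a = b"
        using cN card_le_Suc0_iff_eq[OF nbrs_fin[OF G]] by simp
      ultimately show "a = b" by simp
    qed
    qed (use u Ls in auto)
    have "card {z\<in>V - {u}. sq_adj V E u z} \<le> (\<Sum>w\<in>nbrs E u. card (({w} \<union> (nbrs E w - {u})) \<inter> (V - {u})))"
      by (rule sq_card[OF G])
    also have "\<dots> \<le> (\<Sum>w\<in>nbrs E u. k)"
    proof (rule sum_mono)
      fix w assume w: "w \<in> nbrs E u"
      have "card (({w} \<union> (nbrs E w - {u})) \<inter> (V - {u})) \<le> deg E w"
        using term_le[OF G] w nbrs_sym by metis
      moreover have "w \<in> V" using w nbrs_sub[OF G] by auto
      ultimately show "card (({w} \<union> (nbrs E w - {u})) \<inter> (V - {u})) \<le> k" using maxdeg by fastforce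
    qed
    also have "\<dots> \<le> k" using cN by simp
    finally obtain c' where "good V E L (insert u (V - {u})) c'"
      using extend1[OF G Lk(1)[OF u(1)] Lk(2)[OF u(1)] c] by blast
    moreover have "insert u (V - {u}) = V" using u by auto
    ultimately show False using nog by metis
  qed
  have C2: "\<not> (\<exists>w1 u1 u2 w2. distinct [w1, u1, u2, w2] \<and>
           {w1, u1} \<in> E \<and> {u1, u2} \<in> E \<and> {u2, w2} \<in> E \<and>
           deg E u1 = 2 \<and> deg E u2 = 2 \<and>
           deg E w1 + 1 \<le> k \<and> deg E w2 + 2 \<le> k)"
  proof
    assume "\<exists>w1 u1 u2 w2. distinct [w1, u1, u2, w2] \<and>
           {w1, u1} \<in> E \<and> {u1, u2} \<in> E \<and> {u2, w2} \<in> E \<and>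
           deg E u1 = 2 \<and> deg E u2 = 2 \<and>
           deg E w1 + 1 \<le> k \<and> deg E w2 + 2 \<le> k"
    then obtain w1 u1 u2 w2 where d: "distinct [w1, u1, u2, w2]"
      and e: "{w1, u1} \<in> E" "{u1, u2} \<in> E" "{u2, w2} \<in> E"
      and dg: "deg E u1 = 2" "deg E u2 = 2" "deg E w1 + 1 \<le> k" "deg E w2 + 2 \<le> k" by blast
    have inV: "w1 \<in> V" "u1 \<in> V" "u2 \<in> V" "w2 \<in> V" using e sg_edge[OF G] by blast+
    have N1: "nbrs E u1 = {w1, u2}"
    proof (rule card2_eq[OF nbrs_fin[OF G]])
      show "card (nbrs E u1) = 2" using dg unfolding deg_def by simp
    qed (use nsym e d in auto)
    have N2: "nbrs E u2 = {u1, w2}"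
    proof (rule card2_eq[OF nbrs_fin[OF G]])
      show "card (nbrs E u2) = 2" using dg unfolding deg_def by simp
    qed (use nsym e d in auto)
    define A0 where "A0 = V - {u1, u2}"
    obtain c where c: "good V E L A0 c"
    proof (rule restrict[OF G minimal, of "{u1,u2}" L A0, THEN exE])
      show "\<forall>w\<in>{u1,u2}. \<forall>a\<in>A0. \<forall>b\<in>A0. {a, w} \<in> E \<longrightarrow> {w, b} \<in> E \<longrightarrow> a = b"
      proof (intro ballI impI)
        fix w a b assume w: "w \<in> {u1,u2}" and a: "a \<in> A0" and b: "b \<in> A0" and e1: "{a, w} \<in> E" and e2: "{w, b} \<in> E"
        have "a \<in> nbrs E w" "b \<in> nbrs E w" using nsym[OF e1] nsym[OF e2] by auto
        then show "a = b" using w a b N1 N2 unfolding A0_def by auto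
      qed
    qed (use inV Ls A0_def in auto)
    have "card {z\<in>A0. sq_adj V E u1 z} \<le> (\<Sum>w\<in>nbrs E u1. card (({w} \<union> (nbrs E w - {u1})) \<inter> A0))"
      by (rule sq_card[OF G])
    also have "\<dots> = card (({w1} \<union> (nbrs E w1 - {u1})) \<inter> A0) + card (({u2} \<union> (nbrs E u2 - {u1})) \<inter> A0)"
      using N1 d by simp
    also have "\<dots> \<le> deg E w1 + 1"
    proof -
      have T1: "card (({w1} \<union> (nbrs E w1 - {u1})) \<inter> A0) \<le> deg E w1"
        using term_le[OF G] nsym e by blast
      have "({u2} \<union> (nbrs E u2 - {u1})) \<inter> A0 \<subseteq> {w2}" using N2 A0_def by auto
      then have "card (({u2} \<union> (nbrs E u2 - {u1})) \<inter> A0) \<le> card {w2}"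
        by (intro card_mono) auto
      moreover have "card {w2} = 1" by simp
      ultimately show ?thesis using T1 by linarith
    qed
    finally have b1: "card {z\<in>A0. sq_adj V E u1 z} \<le> k" using dg by linarith
    obtain c1 where c1: "good V E L (insert u1 A0) c1"
      using extend1[OF G Lk(1)[OF inV(2)] Lk(2)[OF inV(2)] c b1] by blast
    have "card {z\<in>insert u1 A0. sq_adj V E u2 z} \<le> (\<Sum>w\<in>nbrs E u2. card (({w} \<union> (nbrs E w - {u2})) \<inter> insert u1 A0))"
      by (rule sq_card[OF G])
    also have "\<dots> = card (({u1} \<union> (nbrs E u1 - {u2})) \<inter> insert u1 A0) + card (({w2} \<union> (nbrs E w2 - {u2})) \<inter> insert u1 A0)"
      using N2 d by simp
    also have "\<dots> \<le> 2 + deg E w2"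
    proof -
      have T2: "card (({w2} \<union> (nbrs E w2 - {u2})) \<inter> insert u1 A0) \<le> deg E w2"
        using term_le[OF G] nsym e by blast
      have "({u1} \<union> (nbrs E u1 - {u2})) \<inter> insert u1 A0 \<subseteq> {u1, w1}" using N1 by auto
      then have "card (({u1} \<union> (nbrs E u1 - {u2})) \<inter> insert u1 A0) \<le> card {u1, w1}"
        by (intro card_mono) auto
      moreover have "card {u1, w1} \<le> 2" by (simp add: card_insert_if)
      ultimately show ?thesis using T2 by linarith
    qed
    finally have b2: "card {z\<in>insert u1 A0. sq_adj V E u2 z} \<le> k" using dg by linarith
    obtain c2 where "good V E L (insert u2 (insert u1 A0)) c2"
      using extend1[OF G Lk(1)[OF inV(3)] Lk(2)[OF inV(3)] c1 b2] by blast
    moreover have "insert u2 (insert u1 A0) = V" using inV A0_def by auto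
    ultimately show False using nog by metis
  qed
  have M2k: "2 * M \<le> real k"
  proof -
    have "2 * M = 12 / \<epsilon>" using M_def by simp
    also have "\<dots> \<le> 3 / \<epsilon>\<^sup>2" using eps by (simp add: field_simps power2_eq_square)
    finally show ?thesis using k_ge by linarith
  qed
  have C3: "\<not> (\<exists>u x y. u \<in> V \<and> 3 \<le> deg E u \<and> real (deg E u) \<le> M \<and>
           x \<noteq> y \<and> x \<in> nbrs E u \<and> y \<in> nbrs E u \<and>
           (\<forall>v \<in> nbrs E u - {x, y}. deg E v = 2 \<and>
               (\<forall>w. {v, w} \<in> E \<and> w \<noteq> u \<longrightarrow> real (deg E w) \<le> M)) \<and>
           real (deg E x) + real (deg E y) \<le> real k - M + 2)"
  proof
    assume "\<exists>u x y. u \<in> V \<and> 3 \<le> deg E u \<and> real (deg E u) \<le> M \<and>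
           x \<noteq> y \<and> x \<in> nbrs E u \<and> y \<in> nbrs E u \<and>
           (\<forall>v \<in> nbrs E u - {x, y}. deg E v = 2 \<and>
               (\<forall>w. {v, w} \<in> E \<and> w \<noteq> u \<longrightarrow> real (deg E w) \<le> M)) \<and>
           real (deg E x) + real (deg E y) \<le> real k - M + 2"
    then obtain u x y where u: "u \<in> V" "3 \<le> deg E u" "real (deg E u) \<le> M"
      and xy: "x \<noteq> y" "x \<in> nbrs E u" "y \<in> nbrs E u"
      and vs: "\<forall>v \<in> nbrs E u - {x, y}. deg E v = 2 \<and>
               (\<forall>w. {v, w} \<in> E \<and> w \<noteq> u \<longrightarrow> real (deg E w) \<le> M)"
      and sxy: "real (deg E x) + real (deg E y) \<le> real k - M + 2" by blast
    define Vs where "Vs = nbrs E u - {x, y}"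
    have finN: "finite (nbrs E u)" using nbrs_fin[OF G] .
    have cVs: "card Vs = deg E u - 2"
      unfolding Vs_def deg_def using xy finN by (simp add: card_Diff_subset)
    have VsV: "Vs \<subseteq> V" using nbrs_sub[OF G] Vs_def by auto
    have Vsne: "Vs \<noteq> {}" using cVs u(2) by auto
    have uVs: "u \<notin> Vs"
    proof
      assume "u \<in> Vs" then have "{u,u} \<in> E" using Vs_def unfolding nbrs_def by auto
      then show False using sg_edge[OF G, of u u] by blast
    qed
    have Nv1: "\<And>v. v \<in> Vs \<Longrightarrow> card (nbrs E v - {u}) = 1"
    proof -
      fix v assume v: "v \<in> Vs"
      have "u \<in> nbrs E v" using v Vs_def nbrs_sym[of u E v] by auto
      then show "card (nbrs E v - {u}) = 1"
        using vs v Vs_def nbrs_fin[OF G] by (simp add: card_Diff_singleton deg_def)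
    qed
    define A0 where "A0 = V - Vs - {u}"
    obtain c where c: "good V E L A0 c"
    proof (rule restrict[OF G minimal, of Vs L A0, THEN exE])
      show "\<forall>w\<in>Vs. \<forall>a\<in>A0. \<forall>b\<in>A0. {a, w} \<in> E \<longrightarrow> {w, b} \<in> E \<longrightarrow> a = b"
      proof (intro ballI impI)
        fix w a b assume w: "w \<in> Vs" and a: "a \<in> A0" and b: "b \<in> A0" and "{a,w} \<in> E" "{w,b} \<in> E"
        then have "a \<in> nbrs E w - {u}" "b \<in> nbrs E w - {u}" using nsym A0_def by auto
        then show "a = b" using Nv1[OF w] card_le_Suc0_iff_eq[of "nbrs E w - {u}"] nbrs_fin[OF G]
          by auto
      qed
    qed (use VsV Vsne Ls A0_def in auto)
    have "card {z\<in>A0. sq_adj V E u z} \<le> (\<Sum>w\<in>nbrs E u. card (({w} \<union> (nbrs E w - {u})) \<inter> A0))"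
      by (rule sq_card[OF G])
    also have "\<dots> = (\<Sum>w\<in>Vs. card (({w} \<union> (nbrs E w - {u})) \<inter> A0)) + (\<Sum>w\<in>{x,y}. card (({w} \<union> (nbrs E w - {u})) \<inter> A0))"
      unfolding Vs_def using finN xy by (intro sum.subset_diff) auto
    also have "\<dots> \<le> card Vs + (deg E x + deg E y)"
    proof (rule add_mono)
      have "(\<Sum>w\<in>Vs. card (({w} \<union> (nbrs E w - {u})) \<inter> A0)) \<le> (\<Sum>w\<in>Vs. 1)"
      proof (rule sum_mono)
        fix w assume w: "w \<in> Vs"
        have "({w} \<union> (nbrs E w - {u})) \<inter> A0 \<subseteq> nbrs E w - {u}" using w A0_def by auto
        then have "card (({w} \<union> (nbrs E w - {u})) \<inter> A0) \<le> card (nbrs E w - {u})"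
          using nbrs_fin[OF G] by (intro card_mono) auto
        then show "card (({w} \<union> (nbrs E w - {u})) \<inter> A0) \<le> 1" using Nv1[OF w] by simp
      qed
      then show "(\<Sum>w\<in>Vs. card (({w} \<union> (nbrs E w - {u})) \<inter> A0)) \<le> card Vs" by simp
      have "card (({x} \<union> (nbrs E x - {u})) \<inter> A0) \<le> deg E x"
        "card (({y} \<union> (nbrs E y - {u})) \<inter> A0) \<le> deg E y"
        using term_le[OF G, of u x A0] term_le[OF G, of u y A0] xy nbrs_sym[of u E x] nbrs_sym[of u E y] by auto
      then show "(\<Sum>w\<in>{x,y}. card (({w} \<union> (nbrs E w - {u})) \<inter> A0)) \<le> deg E x + deg E y"
        using xy by simp
    qed
    finally have "card {z\<in>A0. sq_adj V E u z} \<le> card Vs + (deg E x + deg E y)" .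
    moreover have "real (card Vs + (deg E x + deg E y)) \<le> real k"
      using cVs u sxy by (simp add: of_nat_diff)
    ultimately have b1: "card {z\<in>A0. sq_adj V E u z} \<le> k" by linarith
    obtain c1 where c1: "good V E L (insert u A0) c1"
      using extend1[OF G Lk(1)[OF u(1)] Lk(2)[OF u(1)] c b1] by blast
    have bdv: "\<forall>s\<in>Vs. card {z\<in>V. sq_adj V E s z} \<le> k"
    proof
      fix s assume s: "s \<in> Vs"
      have "card {z\<in>V. sq_adj V E s z} \<le> (\<Sum>w\<in>nbrs E s. card (({w} \<union> (nbrs E w - {s})) \<inter> V))"
        by (rule sq_card[OF G])
      also have "\<dots> \<le> (\<Sum>w\<in>nbrs E s. deg E w)"
      proof (rule sum_mono)
        fix w assume "w \<in> nbrs E s"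
        then have "s \<in> nbrs E w" using nbrs_sym[of w E s] by simp
        then show "card (({w} \<union> (nbrs E w - {s})) \<inter> V) \<le> deg E w" by (rule term_le[OF G])
      qed
      finally have "real (card {z\<in>V. sq_adj V E s z}) \<le> (\<Sum>w\<in>nbrs E s. real (deg E w))"
        by (metis of_nat_le_iff of_nat_sum)
      also have "\<dots> \<le> real (card (nbrs E s)) * M"
      proof (rule sum_bounded_above)
        fix w assume w: "w \<in> nbrs E s"
        show "real (deg E w) \<le> M"
        proof (cases "w = u")
          case True then show ?thesis using u by simp
        next
          case False
          have "{s,w} \<in> E" using w unfolding nbrs_def by (simp add: insert_commute)
          then show ?thesis using vs s Vs_def False by auto
        qed
      qed
      also have "\<dots> = 2 * M" using vs s unfolding Vs_def deg_def by simp
      finally show "card {z\<in>V. sq_adj V E s z} \<le> k" using M2k by linarith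
    qed
    have A1V: "insert u A0 \<subseteq> V" using u A0_def by auto
    obtain c2 where "good V E L (insert u A0 \<union> Vs) c2"
      using extend_set[OF G _ VsV bdv Ls A1V c1] finite_subset[OF VsV finV] by blast
    moreover have "insert u A0 \<union> Vs = V" using u A0_def VsV by auto
    ultimately show False using nog by metis
  qed
  show ?thesis using C1 C2 C3 by blast
qed

end
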